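(* Fix $k>0$ and let $g(x,y)=\frac{e^{ik|x-y|}}{4\pi|x-y|}$ for $x\neq y$ in $\mathbb{R}^3$. For a bounded domain $D\subset\mathbb{R}^3$ set $U_D(x)=\int_{D}g(x,y)\,dy$. Then there exist countably infinitely many pairwise distinct bounded, connected, smooth domains $D_1,D_2,\dots\subset\mathbb{R}^3$ such that for any $i,j$ one has $U_{D_i}(x)=U_{D_j}(x)$ for all $x$ with $|x|>R$, whenever $R>0$ is sufficiently large (depending on $i,j$). *)

theory Defs
  imports "HOL-Analysis.Analysis"
begin

fun Ck_on :: "nat \<Rightarrow> 'a::euclidean_space set \<Rightarrow> ('a \<Rightarrow> real) \<Rightarrow> bool" where
  "Ck_on 0 S f = continuous_on S f"
| "Ck_on (Suc n) S f =
     (\<exists>f'. (\<forall>x\<in>S. (f has_derivative f' x) (at x)) \<and> (\<forall>v. Ck_on n S (\<lambda>x. f' x v)))"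

definition smooth_on :: "'a::euclidean_space set \<Rightarrow> ('a \<Rightarrow> real) \<Rightarrow> bool" where
  "smooth_on S f \<longleftrightarrow> (\<forall>n. Ck_on n S f)"

definition smooth_bounded_domain :: "'a::euclidean_space set \<Rightarrow> bool" where
  "smooth_bounded_domain D \<longleftrightarrow>
     open D \<and> bounded D \<and> connected D \<and> D \<noteq> {} \<and>
     (\<forall>p\<in>frontier D. \<exists>V \<phi>. open V \<and> p \<in> V \<and> smooth_on V \<phi> \<and>
        (\<forall>x\<in>V. \<not> (\<phi> has_derivative (\<lambda>h. 0)) (at x)) \<and>
        D \<inter> V = {x\<in>V. \<phi> x < 0})"

definition helmholtz_green :: "real \<Rightarrow> real^3 \<Rightarrow> real^3 \<Rightarrow> complex" where
  "helmholtz_green k x y =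
     exp (\<i> * complex_of_real (k * dist x y)) / complex_of_real (4 * pi * dist x y)"

definition volume_potential :: "real \<Rightarrow> (real^3) set \<Rightarrow> real^3 \<Rightarrow> complex" where
  "volume_potential k D x = integral D (\<lambda>y. helmholtz_green k x y)"

end

theory Submission
  imports Defs
begin

lemma E_deriv:
  fixes k t :: real
  shows "((\<lambda>t. exp (\<i> * complex_of_real (k * t))) has_vector_derivative
           (\<i> * complex_of_real k * exp (\<i> * complex_of_real (k * t)))) (at t within s)"
proof -
  have "((\<lambda>z. exp (\<i> * (complex_of_real k * z))) has_field_derivative
           (\<i> * complex_of_real k * exp (\<i> * (complex_of_real k * complex_of_real t)))) (at (complex_of_real t))"
    by (auto intro!: derivative_eq_intros simp: algebra_simps)
  from has_vector_derivative_real_field[OF this, of s] show ?thesis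
    by (simp add: of_real_mult)
qed

lemma chain_E:
  fixes k :: real
  assumes "(u has_real_derivative u') (at x within s)"
  shows "((\<lambda>t. exp (\<i> * complex_of_real (k * u t))) has_vector_derivative
           (u' *\<^sub>R (\<i> * complex_of_real k * exp (\<i> * complex_of_real (k * u x))))) (at x within s)"
proof -
  have "((\<lambda>t. exp (\<i> * complex_of_real (k * t))) \<circ> u has_vector_derivative
           (u' *\<^sub>R (\<i> * complex_of_real k * exp (\<i> * complex_of_real (k * u x))))) (at x within s)"
    apply (rule vector_diff_chain_within)
    using assms has_real_derivative_iff_has_vector_derivative apply blast
    by (rule E_deriv)
  then show ?thesis by (simp add: o_def)
qed

lemma inner_int:
  fixes k r L c :: real
  assumes k: "k > 0" and r: "0 < r" "r < L" and c: "c \<in> {-r..r}"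
  shows "((\<lambda>\<sigma>. complex_of_real (\<sigma> * (r\<^sup>2 - c\<^sup>2)) *
             exp (\<i> * complex_of_real (k * sqrt (\<sigma>\<^sup>2 * (r\<^sup>2 - c\<^sup>2) + (L - c)\<^sup>2))) /
             complex_of_real (4 * pi * sqrt (\<sigma>\<^sup>2 * (r\<^sup>2 - c\<^sup>2) + (L - c)\<^sup>2)))
         has_integral
           ((exp (\<i> * complex_of_real (k * sqrt (r\<^sup>2 + L\<^sup>2 - 2 * L * c))) -
             exp (\<i> * complex_of_real (k * (L - c)))) / (4 * pi * \<i> * complex_of_real k))) {0..1}"
proof -
  define a where "a = r\<^sup>2 - c\<^sup>2"
  define d where "d = L - c"
  have a: "a \<ge> 0" using c by (simp add: a_def abs_le_square_iff[symmetric] abs_le_iff) 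
  have d: "d > 0" using c r by (simp add: d_def)
  define u where "u \<sigma> = sqrt (\<sigma>\<^sup>2 * a + d\<^sup>2)" for \<sigma>
  have upos: "u \<sigma> > 0" for \<sigma> using a d by (simp add: u_def add_nonneg_pos)
  have uder: "(u has_real_derivative (\<sigma> * a / u \<sigma>)) (at \<sigma> within S)" for \<sigma> S
  proof -
    have "\<sigma>\<^sup>2 * a + d\<^sup>2 > 0" using a d by (simp add: add_nonneg_pos)
    then show ?thesis unfolding u_def
      by (auto intro!: derivative_eq_intros simp: field_simps power2_eq_square)
  qed
  define F where "F \<sigma> = exp (\<i> * complex_of_real (k * u \<sigma>)) / (4 * pi * \<i> * complex_of_real k)" for \<sigma>
  have Fder: "(F has_vector_derivative
       (complex_of_real (\<sigma> * a) * exp (\<i> * complex_of_real (k * u \<sigma>)) / complex_of_real (4 * pi * u \<sigma>)))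
       (at \<sigma> within {0..1})" for \<sigma>
  proof -
    have "((\<lambda>t. exp (\<i> * complex_of_real (k * u t)) / (4 * pi * \<i> * complex_of_real k)) has_vector_derivative
           ((\<sigma> * a / u \<sigma>) *\<^sub>R (\<i> * complex_of_real k * exp (\<i> * complex_of_real (k * u \<sigma>)))) / (4 * pi * \<i> * complex_of_real k)) (at \<sigma> within {0..1})"
      by (intro has_vector_derivative_divide chain_E uder)
    moreover have "((\<sigma> * a / u \<sigma>) *\<^sub>R (\<i> * complex_of_real k * exp (\<i> * complex_of_real (k * u \<sigma>)))) / (4 * pi * \<i> * complex_of_real k)
        = complex_of_real (\<sigma> * a) * exp (\<i> * complex_of_real (k * u \<sigma>)) / complex_of_real (4 * pi * u \<sigma>)"
      using k upos[of \<sigma>] by (simp add: scaleR_conv_of_real field_simps)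
    ultimately show ?thesis unfolding F_def by simp
  qed
  have int: "((\<lambda>\<sigma>. complex_of_real (\<sigma> * a) * exp (\<i> * complex_of_real (k * u \<sigma>)) / complex_of_real (4 * pi * u \<sigma>))
        has_integral (F 1 - F 0)) {0..1}"
    by (rule fundamental_theorem_of_calculus[OF _ Fder]) simp
  have eq1: "u 1 = sqrt (r\<^sup>2 + L\<^sup>2 - 2 * L * c)"
    unfolding u_def a_def d_def by (simp add: power2_eq_square algebra_simps)
  have eq0: "u 0 = L - c" using d by (simp add: u_def d_def)
  have "F 1 - F 0 = (exp (\<i> * complex_of_real (k * sqrt (r\<^sup>2 + L\<^sup>2 - 2 * L * c))) -
             exp (\<i> * complex_of_real (k * (L - c)))) / (4 * pi * \<i> * complex_of_real k)"
    by (simp only: F_def eq1 eq0 diff_divide_distrib)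
  with int show ?thesis unfolding u_def a_def d_def by simp
qed

lemma outer_int:
  fixes k r L :: real
  assumes k: "k > 0" and r: "0 < r" "r < L"
  defines "G \<equiv> \<lambda>w::real. - (exp (\<i> * complex_of_real (k * w)) * (complex_of_real w / (\<i> * complex_of_real k) + 1 / complex_of_real (k\<^sup>2))) / complex_of_real L"
  defines "H \<equiv> \<lambda>c::real. \<i> * exp (\<i> * complex_of_real (k * (L - c))) / complex_of_real k"
  shows "((\<lambda>c. exp (\<i> * complex_of_real (k * sqrt (r\<^sup>2 + L\<^sup>2 - 2 * L * c))) -
             exp (\<i> * complex_of_real (k * (L - c))))
         has_integral ((G (L - r) - G (L + r)) - (H r - H (-r)))) {-r..r}"
proof -
  define w where "w c = sqrt (r\<^sup>2 + L\<^sup>2 - 2 * L * c)" for c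
  have wpos: "w c > 0" if "c \<in> {-r..r}" for c
  proof -
    have "r\<^sup>2 + L\<^sup>2 - 2 * L * c \<ge> (L - r)\<^sup>2" using that r by (simp add: power2_eq_square algebra_simps)
    moreover have "(L - r)\<^sup>2 > 0" using r by simp
    ultimately have "r\<^sup>2 + L\<^sup>2 - 2 * L * c > 0" by linarith
    then show ?thesis unfolding w_def by simp
  qed
  have wder: "(w has_real_derivative (- L / w c)) (at c within {-r..r})" if "c \<in> {-r..r}" for c
  proof -
    have "r\<^sup>2 + L\<^sup>2 - 2 * L * c > 0" using wpos[OF that] unfolding w_def by simp
    then show ?thesis unfolding w_def
      by (auto intro!: derivative_eq_intros simp: field_simps power2_eq_square)
  qed
  define F where "F c = G (w c) - H c" for c
  have Fder: "(F has_vector_derivative (exp (\<i> * complex_of_real (k * w c)) - exp (\<i> * complex_of_real (k * (L - c)))))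
       (at c within {-r..r})" if "c \<in> {-r..r}" for c
  proof -
    have d1: "((\<lambda>c. complex_of_real (w c)) has_vector_derivative complex_of_real (- L / w c)) (at c within {-r..r})"
      by (intro has_vector_derivative_of_real wder that)
    have d2: "((\<lambda>c. L - c) has_real_derivative (-1)) (at c within {-r..r})"
      by (auto intro!: derivative_eq_intros)
    have "(F has_vector_derivative
        (- ((exp (\<i> * complex_of_real (k * w c)) * (complex_of_real (- L / w c) / (\<i> * complex_of_real k) + 0)
            + ((- L / w c) *\<^sub>R (\<i> * complex_of_real k * exp (\<i> * complex_of_real (k * w c)))) * (complex_of_real (w c) / (\<i> * complex_of_real k) + 1 / complex_of_real (k\<^sup>2)))) / complex_of_real L
         - \<i> * ((-1) *\<^sub>R (\<i> * complex_of_real k * exp (\<i> * complex_of_real (k * (L - c))))) / complex_of_real k))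
        (at c within {-r..r})"
      unfolding F_def G_def H_def
      by (intro has_vector_derivative_diff has_vector_derivative_divide has_vector_derivative_minus
            has_vector_derivative_mult has_vector_derivative_add has_vector_derivative_const
            chain_E wder that d1 d2 has_vector_derivative_mult_right)
    moreover have "(- ((exp (\<i> * complex_of_real (k * w c)) * (complex_of_real (- L / w c) / (\<i> * complex_of_real k) + 0)
            + ((- L / w c) *\<^sub>R (\<i> * complex_of_real k * exp (\<i> * complex_of_real (k * w c)))) * (complex_of_real (w c) / (\<i> * complex_of_real k) + 1 / complex_of_real (k\<^sup>2)))) / complex_of_real L
         - \<i> * ((-1) *\<^sub>R (\<i> * complex_of_real k * exp (\<i> * complex_of_real (k * (L - c))))) / complex_of_real k)
        = exp (\<i> * complex_of_real (k * w c)) - exp (\<i> * complex_of_real (k * (L - c)))"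
      using k r wpos[OF that] by (simp add: scaleR_conv_of_real field_simps power2_eq_square)
    ultimately show ?thesis by simp
  qed
  have int: "((\<lambda>c. exp (\<i> * complex_of_real (k * w c)) - exp (\<i> * complex_of_real (k * (L - c))))
       has_integral (F r - F (-r))) {-r..r}"
    by (rule fundamental_theorem_of_calculus[OF _ Fder]) (use r in auto)
  have w1: "w r = L - r"
  proof -
    have "r\<^sup>2 + L\<^sup>2 - 2 * L * r = (L - r)\<^sup>2" by (simp add: power2_eq_square algebra_simps)
    then show ?thesis using r by (simp add: w_def)
  qed
  have w2: "w (-r) = L + r"
  proof -
    have "r\<^sup>2 + L\<^sup>2 - 2 * L * - r = (L + r)\<^sup>2" by (simp add: power2_eq_square algebra_simps)
    then show ?thesis using r by (simp add: w_def)
  qed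
  have "F r - F (-r) = (G (L - r) - G (L + r)) - (H r - H (-r))"
    by (simp add: F_def w1 w2)
  with int show ?thesis unfolding w_def by simp
qed

lemma exp_i_real: "exp (\<i> * complex_of_real t) = complex_of_real (cos t) + \<i> * complex_of_real (sin t)"
  by (simp add: cis_conv_exp[symmetric] cis.code complex_eq_iff)

lemma closed_form:
  fixes k r L :: real
  assumes k: "k > 0" and r: "0 < r" "r < L"
  defines "G \<equiv> \<lambda>w::real. - (exp (\<i> * complex_of_real (k * w)) * (complex_of_real w / (\<i> * complex_of_real k) + 1 / complex_of_real (k\<^sup>2))) / complex_of_real L"
  defines "H \<equiv> \<lambda>c::real. \<i> * exp (\<i> * complex_of_real (k * (L - c))) / complex_of_real k"
  shows "(G (L - r) - G (L + r)) - (H r - H (-r)) =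
    - \<i> * exp (\<i> * complex_of_real (k * L)) * 2 * complex_of_real (k * r * cos (k * r) - sin (k * r)) / complex_of_real (k\<^sup>2 * L)"
proof -
  have ii: "x / (\<i> * y) = - \<i> * x / y" for x y :: complex
    by (metis divide_divide_eq_left divide_i)
  have a1: "k * (L - r) = k*L - k*r" "k * (L - - r) = k*L + k*r" "k * (L + r) = k*L + k*r" "k * (L - r) = k*L - k*r"
    by (simp_all add: algebra_simps)
  have kk: "complex_of_real k \<noteq> 0" "complex_of_real L \<noteq> 0" using k r by auto
  show ?thesis
    unfolding G_def H_def a1 exp_i_real cos_add sin_add cos_diff sin_diff
    using kk by (simp add: ii field_simps complex_eq_iff power2_eq_square)
qed

lemma vec3_eq: "vector [p$1, p$2, p$3] = (p::real^3)"
  by (simp add: vec_eq_iff forall_3)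

definition g3 :: "real^3 \<Rightarrow> (real \<times> real) \<times> real" where
  "g3 p = ((p$3, p$2), p$1)"
definition h3 :: "(real \<times> real) \<times> real \<Rightarrow> real^3" where
  "h3 z = snd z *\<^sub>R axis 1 1 + snd (fst z) *\<^sub>R axis 2 1 + fst (fst z) *\<^sub>R axis 3 1"

lemma h3_nth [simp]: "h3 z $ 1 = snd z" "h3 z $ 2 = snd (fst z)" "h3 z $ 3 = fst (fst z)"
  by (simp_all add: h3_def axis_def)

lemma h3_vector: "h3 z = vector [snd z, snd (fst z), fst (fst z)]"
  by (simp add: vec_eq_iff forall_3)

lemma g3_h3: "g3 (h3 z) = z" by (simp add: g3_def)
lemma h3_g3: "h3 (g3 p) = p" by (simp add: g3_def vec_eq_iff forall_3)

lemma g3_image: "g3 ` cbox u v = cbox (g3 u) (g3 v)"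
proof
  show "g3 ` cbox u v \<subseteq> cbox (g3 u) (g3 v)"
    by (auto simp: g3_def mem_box_cart cbox_Pair_iff)
  show "cbox (g3 u) (g3 v) \<subseteq> g3 ` cbox u v"
  proof
    fix z assume z: "z \<in> cbox (g3 u) (g3 v)"
    obtain a b c where zz: "z = ((a,b),c)" by (metis prod.collapse)
    have "h3 z \<in> cbox u v" using z unfolding zz
      by (auto simp: g3_def mem_box_cart forall_3)
    then show "z \<in> g3 ` cbox u v" using g3_h3 by (metis image_eqI)
  qed
qed

lemma h3_image: "h3 ` cbox u v = cbox (h3 u) (h3 v)"
proof -
  have "h3 ` cbox u v = h3 ` g3 ` cbox (h3 u) (h3 v)"
    by (simp add: g3_image g3_h3)
  also have "\<dots> = cbox (h3 u) (h3 v)" by (simp add: image_image h3_g3)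
  finally show ?thesis .
qed

lemma g3_content: "measure lborel (g3 ` cbox u v) = measure lborel (cbox u v)"
proof -
  have "measure lborel (g3 ` cbox u v) = measure lborel {u$3..v$3} * measure lborel {u$2..v$2} * measure lborel {u$1..v$1}"
  proof -
    have "g3 ` cbox u v = cbox ((u$3,u$2),u$1) ((v$3,v$2),v$1)" using g3_image[of u v] by (simp only: g3_def)
    then show ?thesis by (simp only: content_Pair box_real)
  qed
  also have "\<dots> = measure lborel (cbox u v)"
  proof (cases "\<forall>i. u$i \<le> v$i")
    case True
    then have ne: "cbox u v \<noteq> {}" by (simp add: interval_ne_empty_cart)
    have p3: "prod f (UNIV::3 set) = f 1 * f 2 * f 3" for f :: "3 \<Rightarrow> real"
      unfolding UNIV_3 by simp
    show ?thesis using True unfolding content_cbox_cart[OF ne] p3 by (simp add: forall_3)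
  next
    case False
    then obtain i where i: "v$i < u$i" by (auto simp: not_le)
    then have e: "cbox u v = {}" by (auto simp: mem_box_cart) (meson order_trans not_le)
    have "u$1 > v$1 \<or> u$2 > v$2 \<or> u$3 > v$3" using i exhaust_3[of i] by auto
    then show ?thesis using e by auto
  qed
  finally show ?thesis .
qed

lemma fubini3:
  fixes H :: "real^3 \<Rightarrow> complex" and a b :: "real^3"
  assumes cont: "continuous_on (cbox a b) H"
  shows "(H has_integral integral {a$3..b$3} (\<lambda>\<theta>. integral {a$2..b$2} (\<lambda>c. integral {a$1..b$1} (\<lambda>\<sigma>. H (vector [\<sigma>, c, \<theta>]))))) (cbox a b)"
proof -
  define Hp where "Hp z = H (h3 z)" for z
  have cb: "h3 ` cbox (g3 a) (g3 b) = cbox a b" by (simp add: h3_image h3_g3)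
  have cHp: "continuous_on (cbox (g3 a) (g3 b)) Hp"
    unfolding Hp_def
    by (rule continuous_on_compose2[OF cont]) (auto simp: h3_def cb[symmetric] intro!: continuous_intros)
  have cHp': "continuous_on (cbox ((a$3, a$2), a$1) ((b$3, b$2), b$1)) Hp"
    using cHp by (simp add: g3_def)
  have "(Hp has_integral integral (cbox (g3 a) (g3 b)) Hp) (cbox (g3 a) (g3 b))"
    using cHp integrable_continuous by blast
  moreover have "integral (cbox (g3 a) (g3 b)) Hp =
      integral (cbox (a$3, a$2) (b$3, b$2)) (\<lambda>x. integral (cbox (a$1) (b$1)) (\<lambda>y. Hp (x, y)))"
    using integral_prod_continuous[OF cHp'] by (simp add: g3_def)
  moreover have "integral (cbox (a$3, a$2) (b$3, b$2)) (\<lambda>x. integral (cbox (a$1) (b$1)) (\<lambda>y. Hp (x, y)))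
      = integral (cbox (a$3) (b$3)) (\<lambda>\<theta>. integral (cbox (a$2) (b$2)) (\<lambda>c. integral (cbox (a$1) (b$1)) (\<lambda>y. Hp ((\<theta>, c), y))))"
  proof -
    have e: "cbox ((a$3, a$2), a$1) ((b$3, b$2), b$1) = cbox (a $ 3, a $ 2) (b $ 3, b $ 2) \<times> {a$1..b$1}"
      by (metis cbox_Pair_eq box_real(2))
    have ci: "continuous_on (cbox (a $ 3, a $ 2) (b $ 3, b $ 2)) (\<lambda>x. integral (cbox (a $ 1) (b $ 1)) (\<lambda>y. Hp (x, y)))"
      using integral_continuous_on_param[of "cbox (a $ 3, a $ 2) (b $ 3, b $ 2)" "a$1" "b$1" "\<lambda>x y. Hp (x,y)"]
        cHp' e by (simp add: case_prod_unfold)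
    show ?thesis using integral_prod_continuous[OF ci] by simp
  qed
  ultimately have hp: "(Hp has_integral integral (cbox (a$3) (b$3)) (\<lambda>\<theta>. integral (cbox (a$2) (b$2)) (\<lambda>c. integral (cbox (a$1) (b$1)) (\<lambda>y. Hp ((\<theta>, c), y))))) (cbox (g3 a) (g3 b))"
    by simp
  have "((\<lambda>x. Hp (g3 x)) has_integral (1 / 1) *\<^sub>R integral (cbox (a$3) (b$3)) (\<lambda>\<theta>. integral (cbox (a$2) (b$2)) (\<lambda>c. integral (cbox (a$1) (b$1)) (\<lambda>y. Hp ((\<theta>, c), y))))) (h3 ` cbox (g3 a) (g3 b))"
  proof (rule has_integral_twiddle[OF _ h3_g3 g3_h3 _ _ _ _ hp])
    show "continuous (at x) g3" for x unfolding g3_def by (intro continuous_intros)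
    show "\<exists>w z. g3 ` cbox u v = cbox w z" for u v using g3_image by blast
    show "\<exists>w z. h3 ` cbox u v = cbox w z" for u v using h3_image by blast
    show "measure lborel (g3 ` cbox u v) = 1 * measure lborel (cbox u v)" for u v using g3_content by simp
  qed simp
  then show ?thesis unfolding cb Hp_def h3_g3 by (simp add: h3_vector)
qed


definition uu :: "real \<Rightarrow> real \<Rightarrow> real^3 \<Rightarrow> real" where
  "uu r L p = sqrt ((p$1)\<^sup>2 * (r\<^sup>2 - (p$2)\<^sup>2) + (L - p$2)\<^sup>2)"

definition HH :: "real \<Rightarrow> real \<Rightarrow> real \<Rightarrow> real^3 \<Rightarrow> complex" where
  "HH k r L p = complex_of_real (p$1 * (r\<^sup>2 - (p$2)\<^sup>2)) *
      exp (\<i> * complex_of_real (k * uu r L p)) / complex_of_real (4 * pi * uu r L p)"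

lemma uu_pos:
  assumes "0 < r" "r < L" "\<bar>p$2\<bar> \<le> r"
  shows "uu r L p > 0"
proof -
  have "(p$2)\<^sup>2 \<le> r\<^sup>2" by (metis abs_le_square_iff abs_of_pos assms(1) assms(3))
  then have "(p$1)\<^sup>2 * (r\<^sup>2 - (p$2)\<^sup>2) \<ge> 0" by simp
  moreover have "(L - p$2)\<^sup>2 > 0" using assms by auto
  ultimately show ?thesis unfolding uu_def by (simp add: add_nonneg_pos)
qed

lemma box_int:
  fixes k r L :: real
  assumes k: "k > 0" and r: "0 < r" "r < L"
  shows "(HH k r L has_integral
     exp (\<i> * complex_of_real (k * L)) * complex_of_real ((sin (k * r) - k * r * cos (k * r)) / (k ^ 3 * L)))
     (cbox (vector [0, -r, -pi]) (vector [1, r, pi]))"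
proof -
  define a :: "real^3" where "a = vector [0, -r, -pi]"
  define b :: "real^3" where "b = vector [1, r, pi]"
  have inb: "\<bar>p$2\<bar> \<le> r" if "p \<in> cbox a b" for p
    using that by (auto simp: a_def b_def mem_box_cart abs_le_iff dest: spec[of _ 2])
  have cont: "continuous_on (cbox a b) (HH k r L)"
  proof -
    have cu: "continuous_on (cbox a b) (uu r L)" unfolding uu_def by (intro continuous_intros)
    have "continuous_on (cbox a b) (\<lambda>p. complex_of_real (uu r L p))"
      by (intro continuous_intros cu)
    then show ?thesis unfolding HH_def
      by (intro continuous_intros) (use uu_pos[OF r inb] in force)+
  qed
  define G where "G \<equiv> \<lambda>w::real. - (exp (\<i> * complex_of_real (k * w)) * (complex_of_real w / (\<i> * complex_of_real k) + 1 / complex_of_real (k\<^sup>2))) / complex_of_real L"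
  define H where "H \<equiv> \<lambda>c::real. \<i> * exp (\<i> * complex_of_real (k * (L - c))) / complex_of_real k"
  define K where "K = ((G (L - r) - G (L + r)) - (H r - H (-r))) / (4 * pi * \<i> * complex_of_real k)"
  have inner: "integral {0..1} (\<lambda>\<sigma>. HH k r L (vector [\<sigma>, c, \<theta>])) =
     (exp (\<i> * complex_of_real (k * sqrt (r\<^sup>2 + L\<^sup>2 - 2 * L * c))) -
             exp (\<i> * complex_of_real (k * (L - c)))) / (4 * pi * \<i> * complex_of_real k)"
    if "c \<in> {-r..r}" for c \<theta>
    using inner_int[OF k r that] unfolding HH_def uu_def by (simp add: integral_unique)
  have mid: "integral {-r..r} (\<lambda>c. integral {0..1} (\<lambda>\<sigma>. HH k r L (vector [\<sigma>, c, \<theta>]))) = K" for \<theta>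
  proof -
    have "integral {-r..r} (\<lambda>c. integral {0..1} (\<lambda>\<sigma>. HH k r L (vector [\<sigma>, c, \<theta>]))) =
        integral {-r..r} (\<lambda>c. (exp (\<i> * complex_of_real (k * sqrt (r\<^sup>2 + L\<^sup>2 - 2 * L * c))) -
             exp (\<i> * complex_of_real (k * (L - c)))) / (4 * pi * \<i> * complex_of_real k))"
      by (rule integral_cong) (simp add: inner)
    also have "\<dots> = K"
      unfolding K_def G_def H_def
      by (rule integral_unique, rule has_integral_divide, rule outer_int[OF k r])
    finally show ?thesis .
  qed
  have "(HH k r L has_integral integral {a$3..b$3} (\<lambda>\<theta>. integral {a$2..b$2} (\<lambda>c. integral {a$1..b$1} (\<lambda>\<sigma>. HH k r L (vector [\<sigma>, c, \<theta>]))))) (cbox a b)"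
    by (rule fubini3[OF cont])
  moreover have "integral {a$3..b$3} (\<lambda>\<theta>. integral {a$2..b$2} (\<lambda>c. integral {a$1..b$1} (\<lambda>\<sigma>. HH k r L (vector [\<sigma>, c, \<theta>])))) = of_real (2 * pi) * K"
    using mid by (simp add: a_def b_def scaleR_conv_of_real)
  moreover have "of_real (2 * pi) * K = exp (\<i> * complex_of_real (k * L)) * complex_of_real ((sin (k * r) - k * r * cos (k * r)) / (k ^ 3 * L))"
  proof -
    have "K = - \<i> * exp (\<i> * complex_of_real (k * L)) * 2 * complex_of_real (k * r * cos (k * r) - sin (k * r)) / complex_of_real (k\<^sup>2 * L) / (4 * pi * \<i> * complex_of_real k)"
      unfolding K_def G_def H_def by (subst closed_form[OF k r]) (rule refl)
    also have "\<dots> = - exp (\<i> * complex_of_real (k * L)) * 2 * complex_of_real (k * r * cos (k * r) - sin (k * r)) / complex_of_real (k\<^sup>2 * L) / (4 * pi * complex_of_real k)"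
      using k r by (simp add: field_simps)
    finally have Keq: "K = - exp (\<i> * complex_of_real (k * L)) * 2 * complex_of_real (k * r * cos (k * r) - sin (k * r)) / complex_of_real (k\<^sup>2 * L) / (4 * pi * complex_of_real k)" .
    show ?thesis unfolding Keq using k r by (simp add: field_simps power2_eq_square power3_eq_cube)
  qed
  ultimately show ?thesis unfolding a_def b_def by simp
qed


definition qq :: "real \<Rightarrow> real \<Rightarrow> real" where "qq r t = sqrt (r\<^sup>2 - t\<^sup>2)"

definition g0 :: "real \<Rightarrow> real^3 \<Rightarrow> real^3" where
  "g0 r p = (p$1 * qq r (p$2) * cos (p$3)) *\<^sub>R axis 1 1 + (p$1 * qq r (p$2) * sin (p$3)) *\<^sub>R axis 2 1 + (p$2) *\<^sub>R axis 3 1"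

definition g0' :: "real \<Rightarrow> real^3 \<Rightarrow> real^3 \<Rightarrow> real^3" where
  "g0' r p h = (qq r (p$2) * cos (p$3) * h$1 + p$1 * (- (p$2) / qq r (p$2)) * cos (p$3) * h$2 + (- p$1 * qq r (p$2) * sin (p$3)) * h$3) *\<^sub>R axis 1 1
     + (qq r (p$2) * sin (p$3) * h$1 + p$1 * (- (p$2) / qq r (p$2)) * sin (p$3) * h$2 + p$1 * qq r (p$2) * cos (p$3) * h$3) *\<^sub>R axis 2 1
     + (h$2) *\<^sub>R axis 3 1"

lemma lin3: "linear (\<lambda>h::real^3. (a * h$1 + b * h$2 + c * h$3) *\<^sub>R (v::real^3))"
  by (rule linearI) (simp_all add: algebra_simps scaleR_left_distrib)

lemma lin1: "linear (\<lambda>h::real^3. (h$i) *\<^sub>R (v::real^3))"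
  by (rule linearI) (simp_all add: algebra_simps scaleR_left_distrib)

lemma qq_sq: "\<bar>t\<bar> \<le> r \<Longrightarrow> (qq r t)\<^sup>2 = r\<^sup>2 - t\<^sup>2"
  unfolding qq_def by (simp add: abs_le_square_iff[symmetric])

lemma qq_pos: "\<bar>t\<bar> < r \<Longrightarrow> qq r t > 0"
proof -
  assume t: "\<bar>t\<bar> < r"
  have "\<bar>t\<bar>\<^sup>2 < r\<^sup>2" by (rule power_strict_mono) (use t in auto)
  then show ?thesis unfolding qq_def by simp
qed

lemma qq_deriv: "\<bar>t\<bar> < r \<Longrightarrow> (qq r has_real_derivative (- t / qq r t)) (at t within S)"
proof -
  assume t: "\<bar>t\<bar> < r"
  have "r\<^sup>2 - t\<^sup>2 > 0" using qq_pos[OF t] unfolding qq_def by simp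
  then show ?thesis unfolding qq_def
    by (auto intro!: derivative_eq_intros simp: field_simps power2_eq_square)
qed

lemma g0'_linear: "linear (g0' r p)"
  unfolding g0'_def by (intro linear_compose_add lin3 lin1)

lemma g0_deriv:
  assumes "\<bar>p$2\<bar> < r"
  shows "(g0 r has_derivative g0' r p) (at p within S)"
proof -
  have d1: "((\<lambda>p::real^3. p$i) has_derivative (\<lambda>h. h$i)) (at p within S)" for i
    by (rule bounded_linear_imp_has_derivative) (rule bounded_linear_vec_nth)
  have dq: "((\<lambda>p::real^3. qq r (p$2)) has_derivative (\<lambda>h. (- (p$2) / qq r (p$2)) * h$2)) (at p within S)"
    using has_derivative_compose[OF d1 qq_deriv[OF assms, unfolded has_field_derivative_def]]
    by (simp add: o_def mult.commute)
  have dc: "((\<lambda>p::real^3. cos (p$3)) has_derivative (\<lambda>h. (- sin (p$3)) * h$3)) (at p within S)"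
    using has_derivative_compose[OF d1 DERIV_cos[unfolded has_field_derivative_def]]
    by (simp add: o_def mult.commute)
  have ds: "((\<lambda>p::real^3. sin (p$3)) has_derivative (\<lambda>h. cos (p$3) * h$3)) (at p within S)"
    using has_derivative_compose[OF d1 DERIV_sin[unfolded has_field_derivative_def]]
    by (simp add: o_def mult.commute)
  show ?thesis unfolding g0_def
    apply (rule has_derivative_eq_rhs)
     apply (rule has_derivative_add)+
       apply (rule has_derivative_scaleR_left, rule has_derivative_mult, rule has_derivative_mult, rule d1, rule dq, rule dc)
      apply (rule has_derivative_scaleR_left, rule has_derivative_mult, rule has_derivative_mult, rule d1, rule dq, rule ds)
     apply (rule has_derivative_scaleR_left, rule d1)
    apply (rule ext)
    apply (simp only: g0'_def vec_eq_iff forall_3 vector_add_component vector_scaleR_component axis_def vec_lambda_beta)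
    apply (simp add: algebra_simps)
    done
qed


lemma det_g0':
  assumes "\<bar>p$2\<bar> \<le> r"
  shows "det (matrix (g0' r p)) = - (p$1 * (r\<^sup>2 - (p$2)\<^sup>2))"
proof -
  have "det (matrix (g0' r p)) = - (p$1 * (qq r (p$2))\<^sup>2)"
    apply (simp only: det_3 matrix_def vec_lambda_beta g0'_def vector_add_component vector_scaleR_component axis_def)
    apply (simp add: algebra_simps power2_eq_square)
    using sin_cos_squared_add[of "p$3"] by algebra
  then show ?thesis using qq_sq[OF assms] by simp
qed


lemma g0_norm:
  assumes "\<bar>p$2\<bar> \<le> r"
  shows "norm (L *\<^sub>R axis 3 1 - g0 r p) = uu r L p"
proof -
  have "(\<Sum>i\<in>UNIV. (norm ((L *\<^sub>R axis 3 1 - g0 r p) $ i))\<^sup>2) =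
        (p$1)\<^sup>2 * (qq r (p$2))\<^sup>2 + (L - p$2)\<^sup>2"
    apply (simp only: sum_3 g0_def vector_add_component vector_scaleR_component vector_minus_component axis_def vec_lambda_beta real_norm_def power2_abs)
    apply (simp add: algebra_simps power2_eq_square)
    using sin_cos_squared_add[of "p$3"] by algebra
  then show ?thesis using qq_sq[OF assms]
    by (simp add: norm_vec_def L2_set_def uu_def)
qed


definition SS :: "real \<Rightarrow> (real^3) set" where
  "SS r = box (vector [0, -r, -pi]) (vector [1, r, pi])"

lemma SS_mem: "p \<in> SS r \<longleftrightarrow> 0 < p$1 \<and> p$1 < 1 \<and> -r < p$2 \<and> p$2 < r \<and> -pi < p$3 \<and> p$3 < pi"
  by (simp add: SS_def mem_box_cart forall_3)

lemma g0_comp [simp]: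
  "g0 r p $ 1 = p$1 * qq r (p$2) * cos (p$3)"
  "g0 r p $ 2 = p$1 * qq r (p$2) * sin (p$3)"
  "g0 r p $ 3 = p$2"
  by (simp_all add: g0_def axis_def)

lemma g0_inj: "inj_on (g0 r) (SS r)"
proof (rule inj_onI)
  fix p p' assume p: "p \<in> SS r" and p': "p' \<in> SS r" and eq: "g0 r p = g0 r p'"
  have e3: "p$2 = p'$2" using arg_cong[OF eq, of "\<lambda>v. v$3"] by simp
  define q where "q = qq r (p$2)"
  have q: "q > 0" unfolding q_def using p by (intro qq_pos) (auto simp: SS_mem)
  have e1: "p$1 * q * cos (p$3) = p'$1 * q * cos (p'$3)"
    using arg_cong[OF eq, of "\<lambda>v. v$1"] e3 by (simp add: q_def)
  have e2: "p$1 * q * sin (p$3) = p'$1 * q * sin (p'$3)"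
    using arg_cong[OF eq, of "\<lambda>v. v$2"] e3 by (simp add: q_def)
  have rc: "rcis (p$1 * q) (p$3) = rcis (p'$1 * q) (p'$3)"
    using e1 e2 by (simp add: complex_eq_iff)
  have pos: "p$1 * q > 0" "p'$1 * q > 0" using p p' q by (auto simp: SS_mem)
  have t: "p$3 = p'$3"
    using Arg_rcis[of "p$3" "p$1 * q"] Arg_rcis[of "p'$3" "p'$1 * q"] rc pos p p'
    by (auto simp: SS_mem)
  have "p$1 * q = p'$1 * q"
    using arg_cong[OF rc, of cmod] pos by simp
  then have e0: "p$1 = p'$1" using q by simp
  show "p = p'" using e0 e3 t by (simp add: vec_eq_iff forall_3)
qed

lemma norm3_sq: "(norm (y::real^3))\<^sup>2 = (y$1)\<^sup>2 + (y$2)\<^sup>2 + (y$3)\<^sup>2"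
  by (simp add: norm_vec_def L2_set_def sum_3)


lemma g0_in_ball:
  assumes "p \<in> SS r"
  shows "g0 r p \<in> ball 0 r"
proof -
  have a: "\<bar>p$2\<bar> \<le> r" "\<bar>p$2\<bar> < r" using assms by (auto simp: SS_mem)
  have "(norm (g0 r p))\<^sup>2 = (p$1)\<^sup>2 * (qq r (p$2))\<^sup>2 + (p$2)\<^sup>2"
    apply (simp only: norm3_sq g0_comp)
    apply (simp add: algebra_simps power2_eq_square)
    using sin_cos_squared_add[of "p$3"] by algebra
  also have "\<dots> = (p$1)\<^sup>2 * (r\<^sup>2 - (p$2)\<^sup>2) + (p$2)\<^sup>2" using qq_sq[OF a(1)] by simp
  also have "\<dots> < r\<^sup>2"
  proof -
    have "(qq r (p$2))\<^sup>2 > 0" using qq_pos[OF a(2)] by simp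
    then have "r\<^sup>2 - (p$2)\<^sup>2 > 0" using qq_sq[OF a(1)] by simp
    moreover have "(p$1)\<^sup>2 < 1"
    proof -
      have "0 < p$1" "p$1 < 1" using assms by (auto simp: SS_mem)
      then have "p$1 * p$1 < 1 * 1" by (intro mult_strict_mono) auto
      then show ?thesis by (simp add: power2_eq_square)
    qed
    ultimately have "(p$1)\<^sup>2 * (r\<^sup>2 - (p$2)\<^sup>2) < 1 * (r\<^sup>2 - (p$2)\<^sup>2)" by (intro mult_strict_right_mono)
    then show ?thesis by simp
  qed
  finally have "norm (g0 r p) < r" by (rule power2_less_imp_less) (use a in auto)
  then show ?thesis by simp
qed


lemma g0_onto:
  assumes r: "r > 0" and y: "y \<in> ball 0 r" and y2: "y$2 \<noteq> 0"
  shows "y \<in> g0 r ` SS r"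
proof -
  define z where "z = Complex (y$1) (y$2)"
  define \<rho> where "\<rho> = cmod z"
  have z0: "z \<noteq> 0" using y2 by (simp add: z_def complex_eq_iff)
  have rho: "\<rho> > 0" using z0 by (simp add: \<rho>_def)
  have rho2: "\<rho>\<^sup>2 = (y$1)\<^sup>2 + (y$2)\<^sup>2" by (simp add: \<rho>_def z_def cmod_def)
  have "norm y < r" using y by simp
  then have "(norm y)\<^sup>2 < r\<^sup>2" by (intro power_strict_mono) auto
  then have ny: "(y$1)\<^sup>2 + (y$2)\<^sup>2 + (y$3)\<^sup>2 < r\<^sup>2" by (simp add: norm3_sq)
  have "(y$2)\<^sup>2 > 0" using y2 by simp
  moreover have "(y$1)\<^sup>2 \<ge> 0" by simp
  ultimately have y3: "(y$3)\<^sup>2 < r\<^sup>2" using ny by linarith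
  have ay3: "\<bar>y$3\<bar> < r"
    by (rule power2_less_imp_less) (use y3 r in auto)
  define q where "q = qq r (y$3)"
  have q: "q > 0" using qq_pos[OF ay3] by (simp add: q_def)
  have q2: "q\<^sup>2 = r\<^sup>2 - (y$3)\<^sup>2" using qq_sq[of "y$3" r] ay3 by (simp add: q_def)
  have "\<rho>\<^sup>2 < q\<^sup>2" using rho2 q2 ny by simp
  then have rq: "\<rho> < q" by (rule power2_less_imp_less) (use q in auto)
  define \<theta> where "\<theta> = Arg z"
  have th: "-pi < \<theta>" "\<theta> < pi"
  proof -
    show "-pi < \<theta>" unfolding \<theta>_def by (rule mpi_less_Arg)
    have "Arg z \<noteq> pi" using Arg_eq_pi[of z] y2 by (simp add: z_def)
    then show "\<theta> < pi" unfolding \<theta>_def using Arg_le_pi[of z] by simp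
  qed
  define p :: "real^3" where "p = vector [\<rho> / q, y$3, \<theta>]"
  have pS: "p \<in> SS r" using rho q rq th ay3 by (auto simp: SS_mem p_def)
  have zr: "z = rcis \<rho> \<theta>" by (simp add: \<rho>_def \<theta>_def rcis_cmod_Arg)
  have c1: "y$1 = \<rho> * cos \<theta>" using arg_cong[OF zr, of Re] by (simp add: z_def)
  have c2: "y$2 = \<rho> * sin \<theta>" using arg_cong[OF zr, of Im] by (simp add: z_def)
  have "g0 r p = y" using q c1 c2 by (simp add: vec_eq_iff forall_3 p_def q_def[symmetric])
  then show ?thesis using pS by blast
qed


lemma HH_cont:
  assumes r: "0 < r" "r < L"
  shows "continuous_on (cbox (vector [0, -r, -pi]) (vector [1, r, pi])) (HH k r L)"
proof -
  define a :: "real^3" where "a = vector [0, -r, -pi]"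
  define b :: "real^3" where "b = vector [1, r, pi]"
  have inb: "\<bar>p$2\<bar> \<le> r" if "p \<in> cbox a b" for p
    using that by (auto simp: a_def b_def mem_box_cart abs_le_iff dest: spec[of _ 2])
  have cu: "continuous_on (cbox a b) (uu r L)" unfolding uu_def by (intro continuous_intros)
  have "continuous_on (cbox a b) (\<lambda>p. complex_of_real (uu r L p))"
    by (intro continuous_intros cu)
  then have "continuous_on (cbox a b) (HH k r L)" unfolding HH_def
    by (intro continuous_intros) (use uu_pos[OF r inb] in force)+
  then show ?thesis by (simp add: a_def b_def)
qed

definition VV :: "complex \<Rightarrow> real^2" where "VV z = Re z *\<^sub>R axis 1 1 + Im z *\<^sub>R axis 2 1"
definition WW :: "real^2 \<Rightarrow> complex" where "WW v = Complex (v$1) (v$2)"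

lemma VV_lin: "bounded_linear VV"
proof -
  have "linear VV" unfolding VV_def by (rule linearI) (simp_all add: algebra_simps scaleR_left_distrib)
  then show ?thesis by (simp add: linear_conv_bounded_linear)
qed

lemma WW_lin: "bounded_linear WW"
proof -
  have "linear WW" unfolding WW_def by (rule linearI) (simp_all add: complex_eq_iff)
  then show ?thesis by (simp add: linear_conv_bounded_linear)
qed

lemma WW_VV [simp]: "WW (VV z) = z"
  by (simp add: WW_def VV_def axis_def complex_eq_iff)

lemma VV_scaleR: "VV (a *\<^sub>R z) = a *\<^sub>R VV z"
  by (simp add: VV_def algebra_simps)


lemma ball_potential:
  fixes x c :: "real^3" and k r :: real
  assumes k: "k > 0" and r: "r > 0" and xr: "norm (x - c) > r"
  shows "volume_potential k (ball c r) x =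
    exp (\<i> * complex_of_real (k * norm (x - c))) *
    complex_of_real ((sin (k * r) - k * r * cos (k * r)) / (k ^ 3 * norm (x - c)))"
proof -
  define L where "L = norm (x - c)"
  have rL: "0 < r" "r < L" using r xr by (auto simp: L_def)
  define e :: "real^3" where "e = L *\<^sub>R axis 3 1"
  have ne: "norm e = norm (x - c)" using rL by (simp add: e_def L_def)
  obtain Q where Q: "orthogonal_transformation Q" and Qe: "Q e = x - c"
    using orthogonal_transformation_exists[OF ne] by blast
  have linQ: "linear Q" using Q by (simp add: orthogonal_transformation_linear)
  have blQ: "bounded_linear Q" using linQ by (simp add: linear_conv_bounded_linear)
  define G where "G p = c + Q (g0 r p)" for p
  define F where "F y = helmholtz_green k x y" for y
  define Z where "Z = exp (\<i> * complex_of_real (k * L)) *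
    complex_of_real ((sin (k * r) - k * r * cos (k * r)) / (k ^ 3 * L))"
  define S where "S = SS r"
  have S2: "\<bar>p$2\<bar> < r" "\<bar>p$2\<bar> \<le> r" "0 < p$1" if "p \<in> S" for p
    using that by (auto simp: S_def SS_mem)
  have der: "(G has_derivative (\<lambda>h. Q (g0' r p h))) (at p within S)" if "p \<in> S" for p
  proof -
    have "((\<lambda>p. Q (g0 r p)) has_derivative (\<lambda>h. Q (g0' r p h))) (at p within S)"
      by (rule bounded_linear.has_derivative[OF blQ g0_deriv[OF S2(1)[OF that]]])
    then show ?thesis unfolding G_def
      using has_derivative_add[OF has_derivative_const[of c]] by fastforce
  qed
  have detabs: "\<bar>det (matrix (\<lambda>h. Q (g0' r p h)))\<bar> = p$1 * (r\<^sup>2 - (p$2)\<^sup>2)" if "p \<in> S" for p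
  proof -
    have "matrix (\<lambda>h. Q (g0' r p h)) = matrix Q ** matrix (g0' r p)"
      using matrix_compose[OF g0'_linear linQ] by (simp add: o_def)
    then have "\<bar>det (matrix (\<lambda>h. Q (g0' r p h)))\<bar> = \<bar>det (matrix (g0' r p))\<bar>"
      using Q by (simp add: det_mul abs_mult)
    also have "\<dots> = \<bar>p$1 * (r\<^sup>2 - (p$2)\<^sup>2)\<bar>" using det_g0'[OF S2(2)[OF that]] by simp
    also have "\<dots> = p$1 * (r\<^sup>2 - (p$2)\<^sup>2)"
    proof -
      have "(p$2)\<^sup>2 \<le> r\<^sup>2" using S2(2)[OF that] by (metis abs_le_square_iff abs_of_pos r)
      then show ?thesis using S2(3)[OF that] by simp
    qed
    finally show ?thesis .
  qed
  have injG: "inj_on G S"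
  proof (rule inj_onI)
    fix p p' assume "p \<in> S" "p' \<in> S" "G p = G p'"
    then have "g0 r p = g0 r p'" using orthogonal_transformation_inj[OF Q] by (auto simp: G_def inj_eq)
    then show "p = p'" using g0_inj[of r] \<open>p \<in> S\<close> \<open>p' \<in> S\<close> by (auto simp: S_def inj_on_def)
  qed
  have SL: "S \<in> sets lebesgue" unfolding S_def SS_def by (simp add: fmeasurableD)
  have FG: "F (G p) = exp (\<i> * complex_of_real (k * uu r L p)) / complex_of_real (4 * pi * uu r L p)"
    if "p \<in> S" for p
  proof -
    have "dist x (G p) = norm (Q e - Q (g0 r p))" by (simp add: G_def Qe dist_norm algebra_simps)
    also have "\<dots> = norm (e - g0 r p)" using linear_diff[OF linQ] orthogonal_transformation_norm[OF Q] by metis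
    also have "\<dots> = uu r L p" unfolding e_def by (rule g0_norm[OF S2(2)[OF that]])
    finally show ?thesis by (simp add: F_def helmholtz_green_def)
  qed
  have eqS: "\<bar>det (matrix (\<lambda>h. Q (g0' r p h)))\<bar> *\<^sub>R VV (F (G p)) = VV (HH k r L p)" if "p \<in> S" for p
    unfolding detabs[OF that] FG[OF that] VV_scaleR[symmetric] HH_def
    by (simp add: scaleR_conv_of_real)
  have HHint: "(HH k r L has_integral Z) S"
    unfolding S_def SS_def Z_def has_integral_open_interval using box_int[OF k rL] .
  have ai: "(\<lambda>p. VV (HH k r L p)) absolutely_integrable_on S"
  proof -
    have "(\<lambda>p. VV (HH k r L p)) absolutely_integrable_on cbox (vector [0, -r, -pi]) (vector [1, r, pi])"
      by (rule absolutely_integrable_continuous)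
         (intro continuous_on_compose2[OF linear_continuous_on[OF VV_lin] HH_cont[OF rL]], auto)
    then show ?thesis
      by (rule set_integrable_subset) (use SL in \<open>auto simp: S_def SS_def box_subset_cbox\<close>)
  qed
  have lhs: "(\<lambda>p. \<bar>det (matrix (\<lambda>h. Q (g0' r p h)))\<bar> *\<^sub>R VV (F (G p))) absolutely_integrable_on S \<and>
      integral S (\<lambda>p. \<bar>det (matrix (\<lambda>h. Q (g0' r p h)))\<bar> *\<^sub>R VV (F (G p))) = VV Z"
  proof
    show "(\<lambda>p. \<bar>det (matrix (\<lambda>h. Q (g0' r p h)))\<bar> *\<^sub>R VV (F (G p))) absolutely_integrable_on S"
      by (rule absolutely_integrable_spike[OF ai negligible_empty]) (simp add: eqS)
    have "integral S (\<lambda>p. \<bar>det (matrix (\<lambda>h. Q (g0' r p h)))\<bar> *\<^sub>R VV (F (G p))) = integral S (\<lambda>p. VV (HH k r L p))"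
      by (rule integral_cong) (rule eqS)
    also have "\<dots> = VV (integral S (HH k r L))"
      using integral_linear[OF has_integral_integrable[OF HHint] VV_lin] by (simp add: o_def)
    also have "\<dots> = VV Z" using HHint by (simp add: integral_unique)
    finally show "integral S (\<lambda>p. \<bar>det (matrix (\<lambda>h. Q (g0' r p h)))\<bar> *\<^sub>R VV (F (G p))) = VV Z" .
  qed
  have cov: "(\<lambda>y. VV (F y)) absolutely_integrable_on (G ` S) \<and> integral (G ` S) (\<lambda>y. VV (F y)) = VV Z"
    using has_absolute_integral_change_of_variables[OF SL der injG, of "\<lambda>y. VV (F y)" "VV Z"] lhs by blast
  have "((\<lambda>y. VV (F y)) has_integral VV Z) (G ` S)"
    using cov set_lebesgue_integral_eq_integral(1) by (metis has_integral_integrable_integral)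
  from has_integral_linear[OF this WW_lin] have FGS: "(F has_integral Z) (G ` S)" by (simp add: o_def)
  have sub: "G ` S \<subseteq> ball c r"
  proof
    fix y assume "y \<in> G ` S"
    then obtain p where p: "p \<in> S" "y = G p" by blast
    have "norm (g0 r p) < r" using g0_in_ball[of p r] p by (simp add: S_def)
    then show "y \<in> ball c r" using p orthogonal_transformation_norm[OF Q] by (simp add: G_def dist_norm)
  qed
  define a where "a = Q (axis 2 1)"
  have a0: "a \<noteq> 0" using orthogonal_transformation_norm[OF Q, of "axis 2 1"] by (auto simp: a_def)
  have hyp: "ball c r - G ` S \<subseteq> {y. a \<bullet> y = a \<bullet> c}"
  proof
    fix y assume y: "y \<in> ball c r - G ` S"
    obtain w where w: "Q w = y - c" using orthogonal_transformation_surj[OF Q] by (metis surjD)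
    have "norm w < r" using y w orthogonal_transformation_norm[OF Q, of w] by (simp add: dist_norm norm_minus_commute)
    then have wb: "w \<in> ball 0 r" by simp
    have "w$2 = 0"
    proof (rule ccontr)
      assume "w$2 \<noteq> 0"
      then obtain p where "p \<in> S" "w = g0 r p" using g0_onto[OF r wb] by (auto simp: S_def)
      then have "y = G p" using w by (simp add: G_def)
      then show False using y \<open>p \<in> S\<close> by blast
    qed
    moreover have "a \<bullet> (y - c) = w$2"
    proof -
      have "a \<bullet> (y - c) = Q (axis 2 1) \<bullet> Q w" by (simp add: a_def w)
      also have "\<dots> = axis 2 1 \<bullet> w" using Q by (simp add: orthogonal_transformation_def)
      also have "\<dots> = w$2" by (simp add: cart_eq_inner_axis inner_commute)
      finally show ?thesis .
    qed
    ultimately show "y \<in> {y. a \<bullet> y = a \<bullet> c}" by (simp add: inner_diff_right)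
  qed
  have "(F has_integral Z) (ball c r)"
  proof (rule has_integral_spike_set_eq[THEN iffD1, OF _ _ FGS])
    have "{y \<in> G ` S - ball c r. F y \<noteq> 0} = {}" using sub by blast
    then show "negligible {y \<in> G ` S - ball c r. F y \<noteq> 0}" by (simp only: negligible_empty)
    show "negligible {y \<in> ball c r - G ` S. F y \<noteq> 0}"
      by (rule negligible_subset[OF negligible_hyperplane[of a "a \<bullet> c"]]) (use a0 hyp in auto)
  qed
  then show ?thesis unfolding volume_potential_def F_def[symmetric] Z_def L_def
    by (simp add: integral_unique)
qed


lemma Ck_const: "Ck_on n S (\<lambda>x. a)"
proof (induction n arbitrary: a)
  case 0
  then show ?case by simp
next
  case (Suc n)
  show ?case
    by (simp only: Ck_on.simps, rule exI[of _ "\<lambda>x v. 0"]) (simp add: Suc)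
qed

lemma Ck_lin: "Ck_on n S (\<lambda>x. a \<bullet> x + b)"
proof (cases n)
  case 0
  then show ?thesis by (simp add: continuous_intros)
next
  case (Suc m)
  have "((\<lambda>x. a \<bullet> x + b) has_derivative (\<lambda>v. a \<bullet> v)) (at x)" for x
    by (auto intro!: derivative_eq_intros)
  then show ?thesis unfolding Suc
    by (simp only: Ck_on.simps, intro exI[of _ "\<lambda>x v. a \<bullet> v"]) (simp add: Ck_const)
qed

lemma d_phi: "((\<lambda>x::'a::euclidean_space. (x - c) \<bullet> (x - c) - r\<^sup>2) has_derivative (\<lambda>v. 2 * ((x - c) \<bullet> v))) (at x)"
proof -
  have d1: "((\<lambda>x. x - c) has_derivative (\<lambda>v. v)) (at x)"
    by (rule has_derivative_eq_rhs[OF has_derivative_diff[OF has_derivative_ident has_derivative_const]]) simp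
  have "((\<lambda>x. (x - c) \<bullet> (x - c)) has_derivative (\<lambda>v. (x - c) \<bullet> v + v \<bullet> (x - c))) (at x)"
    by (rule has_derivative_inner[OF d1 d1])
  then have "((\<lambda>x. (x - c) \<bullet> (x - c) - r\<^sup>2) has_derivative (\<lambda>v. ((x - c) \<bullet> v + v \<bullet> (x - c)) - 0)) (at x)"
    by (rule has_derivative_diff[OF _ has_derivative_const])
  then show ?thesis by (rule has_derivative_eq_rhs) (simp add: fun_eq_iff inner_commute)
qed

lemma Ck_phi: "Ck_on n S (\<lambda>x. (x - c) \<bullet> (x - c) - r\<^sup>2)"
proof (cases n)
  case 0
  then show ?thesis by (simp add: continuous_intros)
next
  case (Suc m)
  have "((\<lambda>x. (x - c) \<bullet> (x - c) - r\<^sup>2) has_derivative (\<lambda>v. (2 *\<^sub>R v) \<bullet> x + (- (2 * (v \<bullet> c))))) (at x)" for x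
  proof -
    have "((\<lambda>x. (x - c) \<bullet> (x - c) - r\<^sup>2) has_derivative (\<lambda>v. 2 * ((x - c) \<bullet> v))) (at x)"
      by (rule d_phi)
    moreover have "(\<lambda>v. 2 * ((x - c) \<bullet> v)) = (\<lambda>v. (2 *\<^sub>R v) \<bullet> x + (- (2 * (v \<bullet> c))))"
      by (auto simp: fun_eq_iff inner_diff_left inner_diff_right inner_commute)
    ultimately show ?thesis by simp
  qed
  then show ?thesis unfolding Suc Ck_on.simps
    apply (intro exI[of _ "\<lambda>x v. (2 *\<^sub>R v) \<bullet> x + (- (2 * (v \<bullet> c)))"] conjI ballI allI)
     apply assumption
    apply (rule Ck_lin)
    done
qed

lemma ball_smooth:
  fixes c :: "'a::euclidean_space"
  assumes r: "r > 0"
  shows "smooth_bounded_domain (ball c r)"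
  unfolding smooth_bounded_domain_def
proof (intro conjI ballI)
  show "open (ball c r)" "bounded (ball c r)" "connected (ball c r)"
    by (simp_all add: open_ball bounded_ball connected_ball)
  show "ball c r \<noteq> {}" using r by simp
  fix p assume p: "p \<in> frontier (ball c r)"
  define \<phi> where "\<phi> x = (x - c) \<bullet> (x - c) - r\<^sup>2" for x
  have pc: "p \<noteq> c" using p r by (auto simp: frontier_ball)
  have dphi: "(\<phi> has_derivative (\<lambda>v. 2 * ((x - c) \<bullet> v))) (at x)" for x
    unfolding \<phi>_def by (rule d_phi)
  show "\<exists>V \<phi>. open V \<and> p \<in> V \<and> smooth_on V \<phi> \<and>
        (\<forall>x\<in>V. \<not> (\<phi> has_derivative (\<lambda>h. 0)) (at x)) \<and> ball c r \<inter> V = {x \<in> V. \<phi> x < 0}"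
  proof (intro exI conjI)
    show "open (- {c})" by (simp add: open_Compl)
    show "p \<in> - {c}" using pc by simp
    show "smooth_on (- {c}) \<phi>" unfolding smooth_on_def \<phi>_def by (simp add: Ck_phi)
    show "\<forall>x\<in>- {c}. \<not> (\<phi> has_derivative (\<lambda>h. 0)) (at x)"
    proof (intro ballI notI)
      fix x assume x: "x \<in> - {c}" and d0: "(\<phi> has_derivative (\<lambda>h. 0)) (at x)"
      have "(\<lambda>v. 2 * ((x - c) \<bullet> v)) = (\<lambda>h. 0)" using has_derivative_unique[OF dphi d0] .
      from fun_cong[OF this, of "x - c"] have "2 * ((x - c) \<bullet> (x - c)) = 0" by simp
      then show False using x by simp
    qed
    show "ball c r \<inter> - {c} = {x \<in> - {c}. \<phi> x < 0}"
    proof -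
      have "dist c x < r \<longleftrightarrow> (x - c) \<bullet> (x - c) < r\<^sup>2" for x
      proof -
        have "dist c x = norm (x - c)" by (simp add: dist_norm norm_minus_commute)
        moreover have "(x - c) \<bullet> (x - c) = (norm (x - c))\<^sup>2" by (simp add: power2_norm_eq_inner)
        moreover have "norm (x - c) < r \<longleftrightarrow> (norm (x - c))\<^sup>2 < r\<^sup>2"
        proof
          assume "norm (x - c) < r"
          then show "(norm (x - c))\<^sup>2 < r\<^sup>2" by (intro power_strict_mono) auto
        next
          assume "(norm (x - c))\<^sup>2 < r\<^sup>2"
          then show "norm (x - c) < r" by (rule power2_less_imp_less) (use r in auto)
        qed
        ultimately show ?thesis by simp
      qed
      then have eqv: "x \<in> ball c r \<longleftrightarrow> \<phi> x < 0" for x by (simp add: \<phi>_def)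
      show ?thesis by (simp only: eqv set_eq_iff Int_iff mem_Collect_eq) blast
    qed
  qed
qed

lemma exists_root: "\<exists>t. pi \<le> t \<and> t \<le> 2 * pi \<and> sin t - t * cos t = 0"
proof -
  have "continuous_on {pi .. 2 * pi} (\<lambda>t. sin t - t * cos t)" by (intro continuous_intros)
  moreover have "sin (2 * pi) - 2 * pi * cos (2 * pi) \<le> 0" by simp
  moreover have "0 \<le> sin pi - pi * cos pi" by simp
  ultimately show ?thesis using IVT2'[of "\<lambda>t. sin t - t * cos t" "2 * pi" 0 pi] by auto
qed

theorem theorem2:
  fixes k :: real
  assumes "k > 0"
  shows "\<exists>D :: nat \<Rightarrow> (real^3) set.
           inj D \<and> (\<forall>i. smooth_bounded_domain (D i)) \<and>
           (\<forall>i j. \<exists>R0>0. \<forall>R\<ge>R0. \<forall>x. norm x > R \<longrightarrow>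
                volume_potential k (D i) x = volume_potential k (D j) x)"
proof -
  obtain t where t: "pi \<le> t" "sin t - t * cos t = 0" using exists_root by blast
  have tpos: "t > 0" using t(1) pi_gt_zero by linarith
  define r0 where "r0 = t / k"
  have r0: "r0 > 0" using tpos assms by (simp add: r0_def)
  have kr0: "k * r0 = t" using assms by (simp add: r0_def)
  define cen :: "nat \<Rightarrow> real^3" where "cen n = (3 * r0 * real n) *\<^sub>R axis 1 1" for n
  define D where "D n = ball (cen n) r0" for n
  have zero: "volume_potential k (D n) x = 0" if "norm (x - cen n) > r0" for n x
    using ball_potential[OF assms r0 that] t(2) by (simp add: D_def kr0)
  show ?thesis
  proof (rule exI[of _ D], intro conjI)
    show "inj D"
    proof (rule injI)
      fix i j assume eq: "D i = D j"
      have "cen i \<in> D i" using r0 by (simp add: D_def)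
      then have "cen i \<in> D j" using eq by simp
      then have d: "norm (cen j - cen i) < r0" by (simp add: D_def dist_norm)
      have "cen j - cen i = (3 * r0 * (real j - real i)) *\<^sub>R axis 1 1"
        by (simp add: cen_def algebra_simps)
      then have "norm (cen j - cen i) = 3 * r0 * \<bar>real j - real i\<bar>"
        using r0 by (simp add: abs_mult)
      with d have "\<bar>real j - real i\<bar> < 1" using r0 by simp
      then show "i = j" by linarith
    qed
    show "\<forall>i. smooth_bounded_domain (D i)" unfolding D_def by (intro allI ball_smooth[OF r0])
    show "\<forall>i j. \<exists>R0>0. \<forall>R\<ge>R0. \<forall>x. norm x > R \<longrightarrow> volume_potential k (D i) x = volume_potential k (D j) x"
    proof (intro allI)
    fix i j
    show "\<exists>R0>0. \<forall>R\<ge>R0. \<forall>x. norm x > R \<longrightarrow> volume_potential k (D i) x = volume_potential k (D j) x"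
    proof (rule exI[of _ "norm (cen i) + norm (cen j) + r0 + 1"], intro conjI allI impI)
      show "0 < norm (cen i) + norm (cen j) + r0 + 1" using r0 by (simp add: add_nonneg_pos)
      fix R :: real and x :: "real^3" assume R: "R \<ge> norm (cen i) + norm (cen j) + r0 + 1" and x: "norm x > R"
      have "norm (x - cen i) \<ge> norm x - norm (cen i)" by (rule norm_triangle_ineq2)
      then have xi: "norm (x - cen i) > r0" using R x norm_ge_zero[of "cen j"] by linarith
      have "norm (x - cen j) \<ge> norm x - norm (cen j)" by (rule norm_triangle_ineq2)
      then have xj: "norm (x - cen j) > r0" using R x norm_ge_zero[of "cen i"] by linarith
      show "volume_potential k (D i) x = volume_potential k (D j) x"
        using zero[OF xi] zero[OF xj] by simp
    qed
    qed
  qed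
qed

end
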